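(* For an integer $p\ge4$, let $G^I_p$ be the graph with vertex set $\{v_0,\dots,v_{p-1}\}$ and edge set $\{v_0v_3\}\cup\{v_iv_{i+1}: 0\le i\le p-2\}\cup\{v_iv_{i+2}:0\le i\le p-3\}$. If $p=4q+4$ with $q$ a nonnegative integer, then the contracted solution graph $\mathcal{C}^c_4(G^I_p,\{v_{p-2},v_{p-1}\})$ has (at least) $4!$ components each having at least $2^q$ nodes.
   Context: A $k$-coloring of $G$ is a map $\alpha:V(G)\to\{1,\dots,k\}$ with $\alpha(u)\ne\alpha(v)$ for all edges $uv$. The $k$-color graph $\mathcal{C}_k(G)$ has the $k$-colorings of $G$ as nodes, two adjacent iff they differ on exactly one vertex. For $T\subseteq V(G)$, each $k$-coloring $\gamma$ gets label $\gamma|_T$; a label component is a maximal set of $k$-colorings with the same label inducing a connected subgraph of $\mathcal{C}_k(G)$. The contracted solution graph $\mathcal{C}^c_k(G,T)$ is the labeled graph whose nodes correspond bijectively to the label components, distinct nodes adjacent iff some coloring in one component is adjacent in $\mathcal{C}_k(G)$ to some coloring in the other, each node labeled with the common label of its component. *)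

theory Defs
  imports Main "HOL-Library.FuncSet"
begin

definition colorings :: "'v set \<Rightarrow> 'v set set \<Rightarrow> nat \<Rightarrow> ('v \<Rightarrow> nat) set" where
  "colorings V E k = {\<alpha> \<in> V \<rightarrow>\<^sub>E {1..k}. \<forall>u v. {u, v} \<in> E \<longrightarrow> \<alpha> u \<noteq> \<alpha> v}"

definition color_adj :: "'v set \<Rightarrow> 'v set set \<Rightarrow> nat \<Rightarrow> ('v \<Rightarrow> nat) rel" where
  "color_adj V E k = {(\<alpha>, \<beta>). \<alpha> \<in> colorings V E k \<and> \<beta> \<in> colorings V E k
      \<and> card {v \<in> V. \<alpha> v \<noteq> \<beta> v} = 1}"

definition graph_components :: "'a set \<Rightarrow> 'a rel \<Rightarrow> 'a set set" where
  "graph_components N A = N // ((A \<inter> (N \<times> N))\<^sup>*)"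

text \<open>Label components: components of the subgraph of the k-color graph
  keeping only edges between colorings with the same label (restriction to T).\<close>
definition label_components :: "'v set \<Rightarrow> 'v set set \<Rightarrow> nat \<Rightarrow> 'v set \<Rightarrow> ('v \<Rightarrow> nat) set set" where
  "label_components V E k T = graph_components (colorings V E k)
      {(\<alpha>, \<beta>) \<in> color_adj V E k. restrict \<alpha> T = restrict \<beta> T}"

text \<open>Contracted solution graph: nodes are label components; distinct nodes adjacent iff
  some colorings in them are adjacent in the k-color graph.  (Labels are not needed
  for counting components.)\<close>
definition contracted_adj :: "'v set \<Rightarrow> 'v set set \<Rightarrow> nat \<Rightarrow> 'v set \<Rightarrow> ('v \<Rightarrow> nat) set rel" where
  "contracted_adj V E k T = {(C, D). C \<in> label_components V E k T \<and> D \<in> label_components V E k T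
      \<and> C \<noteq> D \<and> (\<exists>\<alpha>\<in>C. \<exists>\<beta>\<in>D. (\<alpha>, \<beta>) \<in> color_adj V E k)}"

definition contracted_components :: "'v set \<Rightarrow> 'v set set \<Rightarrow> nat \<Rightarrow> 'v set \<Rightarrow> ('v \<Rightarrow> nat) set set set" where
  "contracted_components V E k T =
     graph_components (label_components V E k T) (contracted_adj V E k T)"

text \<open>The graph G^I_p on vertices v_0..v_{p-1}, vertex v_i represented by i.\<close>
definition GI_vertices :: "nat \<Rightarrow> nat set" where
  "GI_vertices p = {0..<p}"

definition GI_edges :: "nat \<Rightarrow> nat set set" where
  "GI_edges p = {{0, 3}} \<union> {{i, i + 1} | i. i + 1 < p} \<union> {{i, i + 2} | i. i + 2 < p}"

end

theory Submission
  imports Defs "HOL-Combinatorics.Multiset_Permutations"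
begin

definition gadj :: "nat \<Rightarrow> nat \<Rightarrow> nat \<Rightarrow> bool" where
  "gadj p u v \<longleftrightarrow> u < p \<and> v < p \<and> ((u = 0 \<and> v = 3) \<or> (u = 3 \<and> v = 0) \<or> v = u + 1 \<or> u = v + 1 \<or> v = u + 2 \<or> u = v + 2)"

lemma edge_iff:
  assumes "4 \<le> p"
  shows "{u, v} \<in> GI_edges p \<longleftrightarrow> gadj p u v"
  using assms unfolding GI_edges_def gadj_def
  by (auto simp: doubleton_eq_iff)

abbreviation "Cp p \<equiv> colorings (GI_vertices p) (GI_edges p) 4"
abbreviation "Ap p \<equiv> color_adj (GI_vertices p) (GI_edges p) 4"

lemma C_iff:
  assumes "4 \<le> p"
  shows "\<alpha> \<in> Cp p \<longleftrightarrow> \<alpha> \<in> {0..<p} \<rightarrow>\<^sub>E {1..4} \<and> (\<forall>u v. gadj p u v \<longrightarrow> \<alpha> u \<noteq> \<alpha> v)"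
  using edge_iff[OF assms] unfolding colorings_def GI_vertices_def by auto

lemma four:
  fixes a b c d e :: nat
  assumes "a\<in>{1..4}" "b\<in>{1..4}" "c\<in>{1..4}" "d\<in>{1..4}" "e\<in>{1..4}" "distinct [a,b,c,d]"
    "e\<noteq>a" "e\<noteq>b" "e\<noteq>c" "e\<noteq>d"
  shows False
proof -
  have "card (set [a,b,c,d]) = 4" using distinct_card[OF assms(6)] by simp
  moreover have "set [a,b,c,d] \<subseteq> {1..4}" using assms(1-4) by simp
  ultimately have "set [a,b,c,d] = {1..4}" by (intro card_subset_eq) auto
  hence "e \<in> set [a,b,c,d]" using assms(5) by simp
  thus False using assms(7-10) by simp
qed
lemma nat14: "x \<in> {1..4::nat} \<Longrightarrow> x = 1 \<or> x = 2 \<or> x = 3 \<or> x = 4" by auto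
lemma fourth:
  fixes a b c :: nat
  assumes "a\<in>{1..4}" "b\<in>{1..4}" "c\<in>{1..4}" "distinct [a,b,c]"
  shows "10-a-b-c \<in> {1..4} \<and> 10-a-b-c \<noteq> a \<and> 10-a-b-c \<noteq> b \<and> 10-a-b-c \<noteq> c"
  using nat14[OF assms(1)] nat14[OF assms(2)] nat14[OF assms(3)] assms(4)
  by (elim disjE) simp_all

lemma lt4: "(i::nat) < 4 \<Longrightarrow> i = 0 \<or> i = 1 \<or> i = 2 \<or> i = 3" by auto

lemma g4: "i < 4 \<Longrightarrow> j < 4 \<Longrightarrow> i \<noteq> j \<Longrightarrow> 4 \<le> p \<Longrightarrow> gadj p i j"
proof -
  assume a: "i < 4" "j < 4" "i \<noteq> j" "4 \<le> p"
  show ?thesis using lt4[OF a(1)] lt4[OF a(2)] a(3,4) unfolding gadj_def by (elim disjE) simp_all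
qed

lemma A_diff:
  assumes p: "4 \<le> p" and A: "(\<alpha>, \<beta>) \<in> Ap p"
  shows "\<exists>v. 4 \<le> v \<and> v < p \<and> \<alpha> v \<noteq> \<beta> v \<and> (\<forall>u. u \<noteq> v \<longrightarrow> \<alpha> u = \<beta> u)"
proof -
  have a: "\<alpha> \<in> Cp p" and b: "\<beta> \<in> Cp p" and c: "card {v \<in> GI_vertices p. \<alpha> v \<noteq> \<beta> v} = 1"
    using A unfolding color_adj_def by auto
  from c obtain v where vv: "{v \<in> GI_vertices p. \<alpha> v \<noteq> \<beta> v} = {v}" by (rule card_1_singletonE)
  have vp: "v < p" and nv: "\<alpha> v \<noteq> \<beta> v" using vv unfolding GI_vertices_def by auto
  have aP: "\<alpha> \<in> {0..<p} \<rightarrow>\<^sub>E {1..4}" and aE: "\<forall>u v. gadj p u v \<longrightarrow> \<alpha> u \<noteq> \<alpha> v"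
    using a C_iff[OF p] by auto
  have bP: "\<beta> \<in> {0..<p} \<rightarrow>\<^sub>E {1..4}" and bE: "\<forall>u v. gadj p u v \<longrightarrow> \<beta> u \<noteq> \<beta> v"
    using b C_iff[OF p] by auto
  have oth: "\<forall>u. u \<noteq> v \<longrightarrow> \<alpha> u = \<beta> u"
  proof (intro allI impI)
    fix u assume "u \<noteq> v"
    show "\<alpha> u = \<beta> u"
    proof (cases "u < p")
      case True
      show ?thesis
      proof (rule ccontr)
        assume "\<alpha> u \<noteq> \<beta> u"
        hence "u \<in> {v \<in> GI_vertices p. \<alpha> v \<noteq> \<beta> v}" using True by (simp add: GI_vertices_def)
        hence "u = v" using vv by simp
        thus False using \<open>u \<noteq> v\<close> by simp
      qed
    next
      case False
      hence "u \<notin> {0..<p}" by simp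
      then show ?thesis using PiE_arb[OF aP] PiE_arb[OF bP] by metis
    qed
  qed
  have "4 \<le> v"
  proof (rule ccontr)
    assume "\<not> 4 \<le> v"
    hence v4: "v < 4" by simp
    have ne: "\<forall>u<4. \<beta> v \<noteq> \<alpha> u"
    proof (intro allI impI)
      fix u :: nat assume "u < 4"
      show "\<beta> v \<noteq> \<alpha> u"
      proof (cases "u = v")
        case True then show ?thesis using nv by simp
      next
        case False
        have "gadj p v u" using False \<open>u<4\<close> v4 p g4 by blast
        then have "\<beta> v \<noteq> \<beta> u" using bE by blast
        moreover have "\<alpha> u = \<beta> u" using oth False by blast
        ultimately show ?thesis by simp
      qed
    qed
    have g: "gadj p i j" if "i < 4" "j < 4" "i \<noteq> j" for i j
      using that p g4 by blast
    have "distinct [\<alpha> 0, \<alpha> 1, \<alpha> 2, \<alpha> 3]"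
    proof -
      have "\<alpha> i \<noteq> \<alpha> j" if "i < 4" "j < 4" "i \<noteq> j" for i j
        using aE g[OF that] by blast
      hence "\<alpha> 0 \<noteq> \<alpha> 1" "\<alpha> 0 \<noteq> \<alpha> 2" "\<alpha> 0 \<noteq> \<alpha> 3" "\<alpha> 1 \<noteq> \<alpha> 2" "\<alpha> 1 \<noteq> \<alpha> 3" "\<alpha> 2 \<noteq> \<alpha> 3"
        by auto
      thus ?thesis by simp
    qed
    moreover have r: "\<alpha> i \<in> {1..4}" if "i < 4" for i using aP that p by auto
    moreover have "\<beta> v \<in> {1..4}" using bP vp by auto
    moreover have "\<beta> v \<noteq> \<alpha> 0" "\<beta> v \<noteq> \<alpha> 1" "\<beta> v \<noteq> \<alpha> 2" "\<beta> v \<noteq> \<alpha> 3" using ne by auto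
    ultimately show False using four[OF r r r r, of 0 1 2 3 "\<beta> v"] by simp
  qed
  thus ?thesis using vp nv oth by blast
qed

fun sq :: "nat list \<Rightarrow> nat set \<Rightarrow> nat \<Rightarrow> nat" where
  "sq xs w k = (if k < 4 then xs ! k else if k \<in> w then sq xs w (k - 3)
     else 10 - sq xs w (k - 1) - sq xs w (k - 2) - sq xs w (k - 3))"

declare sq.simps [simp del]

lemma sq_lt4: "k < 4 \<Longrightarrow> sq xs w k = xs ! k" by (subst sq.simps) simp
lemma sq_in: "4 \<le> k \<Longrightarrow> k \<in> w \<Longrightarrow> sq xs w k = sq xs w (k - 3)" by (subst sq.simps) simp
lemma sq_out: "4 \<le> k \<Longrightarrow> k \<notin> w \<Longrightarrow> sq xs w k = 10 - sq xs w (k - 1) - sq xs w (k - 2) - sq xs w (k - 3)"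
  by (subst sq.simps) simp

abbreviation "Perms \<equiv> permutations_of_set {1,2,3,4::nat}"

lemma perm_form:
  assumes "xs \<in> Perms"
  shows "\<exists>a b c d. xs = [a,b,c,d] \<and> distinct [a,b,c,d] \<and> a \<in> {1..4} \<and> b \<in> {1..4} \<and> c \<in> {1..4} \<and> d \<in> {1..4}"
proof -
  have s: "set xs = {1,2,3,4}" and d: "distinct xs" using assms by (auto simp: permutations_of_set_def)
  have "length xs = card {1,2,3,4::nat}" using distinct_card[OF d] s by simp
  hence "length xs = 4" by simp
  then obtain a b c d where "xs = [a,b,c,d]"
    by (auto simp: numeral_eq_Suc length_Suc_conv)
  thus ?thesis using s d by auto
qed

lemma tri:
  assumes "xs \<in> Perms" "2 \<le> k"
  shows "sq xs w k \<in> {1..4} \<and> sq xs w (k-1) \<in> {1..4} \<and> sq xs w (k-2) \<in> {1..4}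
     \<and> distinct [sq xs w (k-2), sq xs w (k-1), sq xs w k]"
  using assms(2)
proof (induction k)
  case 0 then show ?case by simp
next
  case (Suc k)
  obtain a b c d where xs: "xs = [a,b,c,d]" "distinct [a,b,c,d]" "a \<in> {1..4}" "b \<in> {1..4}" "c \<in> {1..4}" "d \<in> {1..4}"
    using perm_form[OF assms(1)] by blast
  show ?case
  proof (cases "Suc k < 4")
    case True
    hence "Suc k = 2 \<or> Suc k = 3" using Suc.prems by auto
    then show ?thesis using xs by (auto simp: sq_lt4)
  next
    case False
    hence k3: "3 \<le> k" by simp
    from Suc.IH k3 have IH: "sq xs w k \<in> {1..4} \<and> sq xs w (k-1) \<in> {1..4} \<and> sq xs w (k-2) \<in> {1..4}
     \<and> distinct [sq xs w (k-2), sq xs w (k-1), sq xs w k]" by simp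
    have e: "Suc k - 1 = k" "Suc k - 2 = k - 1" "Suc k - 3 = k - 2" using k3 by auto
    show ?thesis
    proof (cases "Suc k \<in> w")
      case True
      then have "sq xs w (Suc k) = sq xs w (k - 2)" using sq_in[of "Suc k" w xs] k3 e by simp
      then show ?thesis using IH e by auto
    next
      case F: False
      then have "sq xs w (Suc k) = 10 - sq xs w k - sq xs w (k - 1) - sq xs w (k - 2)"
        using sq_out[of "Suc k" w xs] k3 e by simp
      then show ?thesis using IH e fourth[of "sq xs w k" "sq xs w (k - 1)" "sq xs w (k - 2)"] by auto
    qed
  qed
qed

lemma sq_range: "xs \<in> Perms \<Longrightarrow> sq xs w k \<in> {1..4}"
proof -
  assume xs: "xs \<in> Perms"
  have "k = 0 \<or> k = 1 \<or> 2 \<le> k" by auto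
  thus ?thesis using tri[OF xs, of 2 w] tri[OF xs, of k w] by auto
qed

lemma sq_ne1: "xs \<in> Perms \<Longrightarrow> sq xs w u \<noteq> sq xs w (u+1)"
  using tri[of xs "u+2" w] by auto
lemma sq_ne2: "xs \<in> Perms \<Longrightarrow> sq xs w u \<noteq> sq xs w (u+2)"
  using tri[of xs "u+2" w] by auto

lemma sq_bit:
  assumes "xs \<in> Perms" "4 \<le> k"
  shows "sq xs w k = sq xs w (k-3) \<longleftrightarrow> k \<in> w"
proof (cases "k \<in> w")
  case True then show ?thesis using sq_in assms by auto
next
  case False
  have "distinct [sq xs w (k-1-2), sq xs w (k-1-1), sq xs w (k-1)]" and r: "sq xs w (k-1) \<in> {1..4}"
     "sq xs w (k-1-1) \<in> {1..4}" "sq xs w (k-1-2) \<in> {1..4}"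
    using tri[of xs "k-1" w] assms by auto
  moreover have "k-1-2 = k-3" "k-1-1 = k-2" using assms by auto
  ultimately have "distinct [sq xs w (k-3), sq xs w (k-2), sq xs w (k-1)]" and r: "sq xs w (k-1) \<in> {1..4}"
     "sq xs w (k-2) \<in> {1..4}" "sq xs w (k-3) \<in> {1..4}" by auto
  then have "sq xs w k \<noteq> sq xs w (k-3)" using sq_out[OF assms(2) False]
      fourth[of "sq xs w (k-1)" "sq xs w (k-2)" "sq xs w (k-3)"] by auto
  then show ?thesis using False by simp
qed

definition col :: "nat \<Rightarrow> nat list \<Rightarrow> nat set \<Rightarrow> nat \<Rightarrow> nat" where
  "col p xs w = restrict (sq xs w) {0..<p}"

lemma col_C:
  assumes p: "4 \<le> p" and xs: "xs \<in> Perms"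
  shows "col p xs w \<in> Cp p"
  unfolding C_iff[OF p]
proof
  show "col p xs w \<in> {0..<p} \<rightarrow>\<^sub>E {1..4}" unfolding col_def using sq_range[OF xs] by auto
  show "\<forall>u v. gadj p u v \<longrightarrow> col p xs w u \<noteq> col p xs w v"
  proof (intro allI impI)
    fix u v assume g: "gadj p u v"
    have "sq xs w 0 \<noteq> sq xs w 3"
      using perm_form[OF xs] by (auto simp: sq_lt4)
    hence "sq xs w u \<noteq> sq xs w v" using g sq_ne1[OF xs, of w] sq_ne2[OF xs, of w] unfolding gadj_def
      by (metis)
    thus "col p xs w u \<noteq> col p xs w v" using g unfolding col_def gadj_def by auto
  qed
qed

definition Sq :: "nat \<Rightarrow> nat set" where "Sq q = (\<lambda>m. 5 + 4 * m) ` {..<q}"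

lemma Sq_card: "card (Sq q) = q"
  unfolding Sq_def by (subst card_image) (auto simp: inj_on_def)

lemma Sq_range: "p = 4*q+4 \<Longrightarrow> k \<in> Sq q \<Longrightarrow> 4 \<le> k \<and> k < p"
  unfolding Sq_def by auto

lemma Sq_nonadj: "k \<in> Sq q \<Longrightarrow> k + 1 \<notin> Sq q"
  unfolding Sq_def by auto presburger

lemma frozen:
  assumes pq: "p = 4*q+4" and xs: "xs \<in> Perms" and w: "w \<subseteq> Sq q"
    and A: "(col p xs w, \<beta>) \<in> Ap p"
    and R: "restrict (col p xs w) {p-2, p-1} = restrict \<beta> {p-2, p-1}"
  shows False
proof -
  have p: "4 \<le> p" using pq by simp
  obtain v where v: "4 \<le> v" "v < p" "col p xs w v \<noteq> \<beta> v" "\<forall>u. u \<noteq> v \<longrightarrow> col p xs w u = \<beta> u"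
    using A_diff[OF p A] by blast
  have "v \<noteq> p-2" "v \<noteq> p-1" using R v(3) by (metis insertCI restrict_apply')+
  hence vp: "v + 2 < p" using v(2) by auto
  let ?s = "sq xs w"
  have bC: "\<beta> \<in> Cp p" using A unfolding color_adj_def by auto
  hence bP: "\<beta> \<in> {0..<p} \<rightarrow>\<^sub>E {1..4}" and bE: "\<forall>u v. gadj p u v \<longrightarrow> \<beta> u \<noteq> \<beta> v"
    using C_iff[OF p] by auto
  have bv: "\<beta> v \<in> {1..4}" using bP v by auto
  have cs: "col p xs w u = ?s u" if "u < p" for u using that by (simp add: col_def)
  have nb: "\<beta> v \<noteq> ?s u" if "gadj p v u" for u
  proof -
    have "u \<noteq> v" "u < p" using that unfolding gadj_def by auto
    thus ?thesis using bE that v(4) cs by metis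
  qed
  have "gadj p v (v-2)" "gadj p v (v-1)" "gadj p v (v+1)" "gadj p v (v+2)"
    using v vp by (auto simp: gadj_def)
  hence n1: "\<beta> v \<noteq> ?s (v-2)" "\<beta> v \<noteq> ?s (v-1)" "\<beta> v \<noteq> ?s (v+1)" "\<beta> v \<noteq> ?s (v+2)"
    using nb by auto
  have n0: "\<beta> v \<noteq> ?s v" using v(3) cs v(2) by simp
  have t0: "distinct [?s (v-2), ?s (v-1), ?s v]" using tri[OF xs, of v w] v by simp
  have t1: "distinct [?s (v+1-2), ?s (v+1-1), ?s (v+1)]" using tri[OF xs, of "v+1" w] v by simp
  have t2: "distinct [?s (v+2-2), ?s (v+2-1), ?s (v+2)]" using tri[OF xs, of "v+2" w] v by simp
  have r: "?s k \<in> {1..4}" for k using sq_range[OF xs] .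
  have b1: "?s (v+1) = ?s (v-2) \<longleftrightarrow> v+1 \<in> w" using sq_bit[OF xs, of "v+1" w] v by simp
  have b2: "?s (v+2) = ?s (v-1) \<longleftrightarrow> v+2 \<in> w" using sq_bit[OF xs, of "v+2" w] v
    by (simp add: numeral_eq_Suc)
  have "\<not> (v+1 \<in> w \<and> v+2 \<in> w)" using Sq_nonadj[of "v+1" q] w by auto
  then show False
  proof (cases "v+1 \<in> w")
    case False
    then show False using four[OF r r r r bv, of "v-2" "v-1" v "v+1"] b1 t0 t1 n0 n1
      by (auto simp: numeral_eq_Suc)
  next
    case True
    hence "v+2 \<notin> w" using \<open>\<not> (v+1 \<in> w \<and> v+2 \<in> w)\<close> by blast
    then show False using four[OF r r r r bv, of "v-2" "v-1" v "v+2"] b1 b2 True t0 t2 n0 n1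
        by (auto simp: numeral_eq_Suc)
  qed
qed

lemma col_inj:
  assumes pq: "p = 4*q+4" and xs: "xs \<in> Perms" and w: "w \<subseteq> Sq q" and w': "w' \<subseteq> Sq q"
    and e: "col p xs w = col p xs w'"
  shows "w = w'"
proof -
  have eq: "sq xs w k = sq xs w' k" if "k < p" for k
    using fun_cong[OF e, of k] that by (simp add: col_def)
  have "k \<in> w \<longleftrightarrow> k \<in> w'" if "k \<in> Sq q" for k
  proof -
    have "4 \<le> k" "k < p" using Sq_range[OF pq that] by auto
    thus ?thesis using sq_bit[OF xs, of k w] sq_bit[OF xs, of k w'] eq[of k] eq[of "k-3"] by auto
  qed
  thus ?thesis using w w' by blast
qed

lemma col_pre: "4 \<le> p \<Longrightarrow> xs \<in> Perms \<Longrightarrow> map (col p xs w) [0,1,2,3] = xs"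
  using perm_form[of xs] by (auto simp: col_def sq_lt4)

lemma upd_C:
  assumes p: "4 \<le> p" and g: "\<gamma> \<in> Cp p" and j: "j < p" and c: "c \<in> {1..4}"
    and n: "\<forall>u. gadj p u j \<longrightarrow> \<gamma> u \<noteq> c"
  shows "\<gamma>(j := c) \<in> Cp p"
proof -
  have gP: "\<gamma> \<in> {0..<p} \<rightarrow>\<^sub>E {1..4}" and gE: "\<forall>u v. gadj p u v \<longrightarrow> \<gamma> u \<noteq> \<gamma> v"
    using g C_iff[OF p] by auto
  have sym: "gadj p u v \<Longrightarrow> gadj p v u" for u v unfolding gadj_def by auto
  have "\<gamma>(j := c) \<in> insert j {0..<p} \<rightarrow>\<^sub>E {1..4}" using PiE_fun_upd[OF c gP] .
  moreover have "insert j {0..<p} = {0..<p}" using j by auto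
  ultimately have "\<gamma>(j := c) \<in> {0..<p} \<rightarrow>\<^sub>E {1..4}" by simp
  moreover have "\<forall>u v. gadj p u v \<longrightarrow> (\<gamma>(j := c)) u \<noteq> (\<gamma>(j := c)) v"
  proof (intro allI impI)
    fix u v assume a: "gadj p u v"
    have "u \<noteq> v" using a unfolding gadj_def by auto
    then show "(\<gamma>(j := c)) u \<noteq> (\<gamma>(j := c)) v"
      using a gE n sym by (cases "u = j"; cases "v = j") (auto, metis)
  qed
  ultimately show ?thesis using C_iff[OF p] by blast
qed

lemma m1: "(u::nat) mod 3 \<noteq> (u+1) mod 3" by presburger
lemma m2: "(u::nat) mod 3 \<noteq> (u+2) mod 3" by presburger

definition idx :: "nat \<Rightarrow> nat \<Rightarrow> nat" where
  "idx j k = (if k \<le> j then k else j - 2 + (k - (j - 2)) mod 3)"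

lemma idx_prop:
  assumes "2 \<le> j" "j - 2 \<le> k"
  shows "j - 2 \<le> idx j k \<and> idx j k \<le> j \<and> idx j k mod 3 = k mod 3"
proof (cases "k \<le> j")
  case True then show ?thesis using assms by (simp add: idx_def)
next
  case False
  obtain m where m: "j = m + 2" using assms by (metis add.commute le_Suc_ex)
  have "(m + (k - m) mod 3) mod 3 = k mod 3" using False m by (simp add: mod_add_right_eq)
  moreover have "(k - m) mod 3 < 3" by simp
  ultimately show ?thesis using False m by (simp add: idx_def)
qed

lemma conn:
  assumes p: "4 \<le> p"
  shows "\<alpha> \<in> Cp p \<Longrightarrow> \<tau> \<in> Cp p \<Longrightarrow> 4 \<le> j \<Longrightarrow> (\<forall>i<j. \<alpha> i = \<tau> i) \<Longrightarrow> (\<alpha>, \<tau>) \<in> (Ap p)\<^sup>*"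
proof (induction "p - j" arbitrary: j \<alpha> \<tau>)
  case 0
  have aP: "\<alpha> \<in> {0..<p} \<rightarrow>\<^sub>E {1..4}" and bP: "\<tau> \<in> {0..<p} \<rightarrow>\<^sub>E {1..4}"
    using "0.prems" C_iff[OF p] by auto
  have "\<alpha> = \<tau>"
  proof
    fix i show "\<alpha> i = \<tau> i"
    proof (cases "i < p")
      case True then show ?thesis using "0" "0.prems"(4) by simp
    next
      case False
      hence "i \<notin> {0..<p}" by simp
      then show ?thesis using PiE_arb[OF aP] PiE_arb[OF bP] by metis
    qed
  qed
  then show ?case by simp
next
  case (Suc n)
  have jp: "j < p" and nj: "n = p - Suc j" using Suc.hyps by auto
  have aP: "\<alpha> \<in> {0..<p} \<rightarrow>\<^sub>E {1..4}" and aE: "\<forall>u v. gadj p u v \<longrightarrow> \<alpha> u \<noteq> \<alpha> v"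
    using Suc.prems C_iff[OF p] by auto
  have tP: "\<tau> \<in> {0..<p} \<rightarrow>\<^sub>E {1..4}" and tE: "\<forall>u v. gadj p u v \<longrightarrow> \<tau> u \<noteq> \<tau> v"
    using Suc.prems C_iff[OF p] by auto
  have j4: "4 \<le> j" using Suc.prems by simp
  show ?case
  proof (cases "\<alpha> j = \<tau> j")
    case True
    have "\<forall>i<Suc j. \<alpha> i = \<tau> i" using Suc.prems(4) True less_Suc_eq by auto
    then show ?thesis using Suc.hyps(1)[OF nj Suc.prems(1,2)] j4 by simp
  next
    case False
    define \<gamma> where "\<gamma> = (\<lambda>k. if k < p then \<alpha> (idx j k) else undefined)"
    have ip: "idx j k < p" if "j - 2 \<le> k" for k using idx_prop[of j k] that j4 jp by auto
    have gP: "\<gamma> \<in> {0..<p} \<rightarrow>\<^sub>E {1..4}"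
    proof -
      have "\<alpha> (idx j k) \<in> {1..4}" if "k < p" for k
      proof (cases "k \<le> j")
        case True then show ?thesis using aP that by (auto simp: idx_def)
      next
        case False then show ?thesis using aP ip[of k] by auto
      qed
      thus ?thesis by (auto simp: \<gamma>_def)
    qed
    have near: "\<alpha> (idx j u) \<noteq> \<alpha> (idx j v)" if "j - 2 \<le> u" "j - 2 \<le> v" "u mod 3 \<noteq> v mod 3" for u v
    proof -
      have "j - 2 \<le> idx j u \<and> idx j u \<le> j \<and> idx j u mod 3 = u mod 3"
           "j - 2 \<le> idx j v \<and> idx j v \<le> j \<and> idx j v mod 3 = v mod 3"
        using idx_prop[of j u] idx_prop[of j v] that j4 by auto
      hence ne: "idx j u \<noteq> idx j v" using that by metis
      have "idx j v = idx j u + 1 \<or> idx j u = idx j v + 1 \<or> idx j v = idx j u + 2 \<or> idx j u = idx j v + 2"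
        using ne \<open>j - 2 \<le> idx j u \<and> idx j u \<le> j \<and> idx j u mod 3 = u mod 3\<close>
          \<open>j - 2 \<le> idx j v \<and> idx j v \<le> j \<and> idx j v mod 3 = v mod 3\<close> by arith
      moreover have "idx j u < p" "idx j v < p" using \<open>j - 2 \<le> idx j u \<and> idx j u \<le> j \<and> idx j u mod 3 = u mod 3\<close>
          \<open>j - 2 \<le> idx j v \<and> idx j v \<le> j \<and> idx j v mod 3 = v mod 3\<close> jp by auto
      ultimately have "gadj p (idx j u) (idx j v)" unfolding gadj_def by blast
      thus ?thesis using aE by blast
    qed
    have gE: "\<forall>u v. gadj p u v \<longrightarrow> \<gamma> u \<noteq> \<gamma> v"
    proof (intro allI impI)
      fix u v assume g: "gadj p u v"
      have up: "u < p" "v < p" using g unfolding gadj_def by auto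
      show "\<gamma> u \<noteq> \<gamma> v"
      proof (cases "u \<le> j \<and> v \<le> j")
        case True
        then show ?thesis using up aE g by (simp add: \<gamma>_def idx_def)
      next
        case False
        have g3: "(u = 0 \<and> v = 3) \<or> (u = 3 \<and> v = 0) \<or> v = u + 1 \<or> u = v + 1 \<or> v = u + 2 \<or> u = v + 2"
          using g unfolding gadj_def by blast
        have "v = u + 1 \<or> u = v + 1 \<or> v = u + 2 \<or> u = v + 2" using g3 False j4 by auto
        hence "u mod 3 \<noteq> v mod 3" using m1[of u] m2[of u] m1[of v] m2[of v] by auto
        moreover have "j - 2 \<le> u \<and> j - 2 \<le> v" using False g3 by (elim disjE) linarith+
        ultimately have "j - 2 \<le> u \<and> j - 2 \<le> v \<and> u mod 3 \<noteq> v mod 3" by simp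
        then show ?thesis using near up by (simp add: \<gamma>_def)
      qed
    qed
    have gC: "\<gamma> \<in> Cp p" using gP gE C_iff[OF p] by blast
    have ga: "\<gamma> i = \<alpha> i" if "i < Suc j" for i using that jp by (simp add: \<gamma>_def idx_def)
    have tj: "\<tau> j \<in> {1..4}" using tP jp by auto
    have gn: "\<forall>u. gadj p u j \<longrightarrow> \<gamma> u \<noteq> \<tau> j"
    proof (intro allI impI)
      fix u assume g: "gadj p u j"
      have "u = j - 1 \<or> u = j - 2 \<or> u = j + 1 \<or> u = j + 2" using g j4 unfolding gadj_def by auto
      moreover have "\<gamma> (j+1) = \<alpha> (j - 2)" if "j + 1 < p"
        using that j4 by (simp add: \<gamma>_def idx_def)
      moreover have "\<gamma> (j+2) = \<alpha> (j - 1)" if "j + 2 < p"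
      proof -
        have "(j + 2 - (j - 2)) mod 3 = 1" using j4 by simp
        hence "idx j (j+2) = j - 1" unfolding idx_def using j4 by simp
        thus ?thesis using that by (simp add: \<gamma>_def)
      qed
      moreover have "\<alpha> (j-1) = \<tau> (j-1)" "\<alpha> (j-2) = \<tau> (j-2)" using Suc.prems(4) j4 by auto
      moreover have "gadj p (j-1) j" "gadj p (j-2) j" using jp j4 by (auto simp: gadj_def)
      hence "\<tau> (j-1) \<noteq> \<tau> j" "\<tau> (j-2) \<noteq> \<tau> j" using tE by auto
      moreover have "u < p" using g unfolding gadj_def by auto
      ultimately show "\<gamma> u \<noteq> \<tau> j" using ga j4 by auto
    qed
    define \<gamma>' where "\<gamma>' = \<gamma>(j := \<tau> j)"
    have g'C: "\<gamma>' \<in> Cp p" unfolding \<gamma>'_def using upd_C[OF p gC jp tj gn] .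
    have "{v \<in> GI_vertices p. \<gamma> v \<noteq> \<gamma>' v} = {j}"
      using jp ga False by (auto simp: \<gamma>'_def GI_vertices_def)
    hence step: "(\<gamma>, \<gamma>') \<in> Ap p" using gC g'C unfolding color_adj_def by auto
    have s1: "(\<alpha>, \<gamma>) \<in> (Ap p)\<^sup>*"
      using Suc.hyps(1)[OF nj Suc.prems(1) gC] j4 ga by simp
    have s2: "(\<gamma>', \<tau>) \<in> (Ap p)\<^sup>*"
    proof -
      have "\<forall>i<Suc j. \<gamma>' i = \<tau> i" using ga Suc.prems(4) by (auto simp: \<gamma>'_def less_Suc_eq)
      thus ?thesis using Suc.hyps(1)[OF nj g'C Suc.prems(2)] j4 by simp
    qed
    show ?thesis using s1 step s2 by (meson rtrancl_into_rtrancl rtrancl_trans)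
  qed
qed

lemma gc_img_sub:
  assumes "x \<in> N" shows "(A \<inter> N \<times> N)\<^sup>* `` {x} \<subseteq> N"
proof
  fix y assume "y \<in> (A \<inter> N \<times> N)\<^sup>* `` {x}"
  hence "(x, y) \<in> (A \<inter> N \<times> N)\<^sup>*" by simp
  thus "y \<in> N" by (induction rule: rtrancl_induct) (use assms in auto)
qed

lemma gc_sub: "graph_components N A \<subseteq> Pow N"
proof
  fix D assume "D \<in> graph_components N A"
  then obtain x where "x \<in> N" "D = (A \<inter> N \<times> N)\<^sup>* `` {x}"
    unfolding graph_components_def by (blast elim: quotientE)
  thus "D \<in> Pow N" using gc_img_sub by simp
qed

lemma gc_mem: "x \<in> N \<Longrightarrow> (A \<inter> N \<times> N)\<^sup>* `` {x} \<in> graph_components N A"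
  unfolding graph_components_def by (rule quotientI)

lemma C_finite: assumes "4 \<le> p" shows "finite (Cp p)"
proof -
  have "Cp p \<subseteq> {0..<p} \<rightarrow>\<^sub>E {1..4::nat}"
  proof
    fix x assume "x \<in> Cp p" thus "x \<in> {0..<p} \<rightarrow>\<^sub>E {1..4::nat}" using C_iff[OF assms] by simp
  qed
  moreover have "finite ({0..<p} \<rightarrow>\<^sub>E {1..4::nat})" by (intro finite_PiE) auto
  ultimately show ?thesis by (rule finite_subset)
qed

definition pre :: "(nat \<Rightarrow> nat) \<Rightarrow> nat list" where "pre \<alpha> = map \<alpha> [0,1,2,3]"

lemma A_pre: "4 \<le> p \<Longrightarrow> (\<alpha>, \<beta>) \<in> Ap p \<Longrightarrow> pre \<alpha> = pre \<beta>"
  using A_diff[of p \<alpha> \<beta>] unfolding pre_def by fastforce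

lemma As_pre: assumes "4 \<le> p" "(\<alpha>, \<beta>) \<in> (Ap p)\<^sup>*" shows "pre \<alpha> = pre \<beta>"
  using assms(2) by (induction rule: rtrancl_induct) (auto dest: A_pre[OF assms(1)])

lemma A_C: "(\<alpha>, \<beta>) \<in> Ap p \<Longrightarrow> \<alpha> \<in> Cp p \<and> \<beta> \<in> Cp p"
  unfolding color_adj_def by auto

theorem proposition5:
  fixes p q :: nat
  assumes "p = 4 * q + 4"
  shows "card {X \<in> contracted_components (GI_vertices p) (GI_edges p) 4 {p - 2, p - 1}.
                 card X \<ge> 2 ^ q} \<ge> fact 4"
proof -
  have p: "4 \<le> p" using assms by simp
  define T where "T = {p - 2, p - 1}"
  define C where "C = Cp p"
  define L where "L = {(\<alpha>, \<beta>) \<in> Ap p. restrict \<alpha> T = restrict \<beta> T}"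
  define R where "R = (L \<inter> C \<times> C)\<^sup>*"
  define LC where "LC = label_components (GI_vertices p) (GI_edges p) 4 T"
  have LC_eq: "LC = graph_components C L"
    unfolding LC_def label_components_def C_def L_def by simp
  define CA where "CA = contracted_adj (GI_vertices p) (GI_edges p) 4 T"
  define CR where "CR = (CA \<inter> LC \<times> LC)\<^sup>*"
  define CC where "CC = contracted_components (GI_vertices p) (GI_edges p) 4 T"
  have CC_eq: "CC = graph_components LC CA"
    unfolding CC_def contracted_components_def LC_def CA_def by simp
  have LCm: "R `` {\<alpha>} \<in> LC" if "\<alpha> \<in> C" for \<alpha>
    unfolding LC_eq R_def using gc_mem[OF that] .
  have R_sub: "R \<subseteq> (Ap p)\<^sup>*" unfolding R_def L_def by (rule rtrancl_mono) auto
  have LC_pre: "pre \<alpha> = pre \<beta>" if "D \<in> LC" "\<alpha> \<in> D" "\<beta> \<in> D" for D \<alpha> \<beta>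
  proof -
    from that(1) obtain \<delta> where "\<delta> \<in> C" "D = R `` {\<delta>}"
      unfolding LC_eq graph_components_def R_def by (auto elim: quotientE)
    hence "(\<delta>, \<alpha>) \<in> (Ap p)\<^sup>*" "(\<delta>, \<beta>) \<in> (Ap p)\<^sup>*" using that R_sub by auto
    thus ?thesis using As_pre[OF p] by metis
  qed
  have lift: "(R `` {\<alpha>}, R `` {\<beta>}) \<in> CR" if "(\<alpha>, \<beta>) \<in> (Ap p)\<^sup>*" "\<alpha> \<in> C" for \<alpha> \<beta>
    using that(1)
  proof (induction rule: rtrancl_induct)
    case base then show ?case unfolding CR_def by simp
  next
    case (step y z)
    have yz: "y \<in> C" "z \<in> C" using A_C[OF step(2)] unfolding C_def by auto
    show ?case
    proof (cases "R `` {y} = R `` {z}")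
      case True then show ?thesis using step by simp
    next
      case False
      have "y \<in> R `` {y}" "z \<in> R `` {z}" unfolding R_def by auto
      hence "(R `` {y}, R `` {z}) \<in> CA \<inter> LC \<times> LC"
        using False step(2) LCm yz unfolding CA_def contracted_adj_def LC_def[symmetric] by blast
      then show ?thesis using step(3) unfolding CR_def by (meson rtrancl_into_rtrancl)
    qed
  qed
  have CR_pre: "pre \<alpha> = pre \<beta>" if "D0 \<in> LC" "(D0, D) \<in> CR" "\<alpha> \<in> D0" "\<beta> \<in> D" for D0 D \<alpha> \<beta>
  proof -
  have "(D0, D) \<in> (CA \<inter> LC \<times> LC)\<^sup>*" using that(2) unfolding CR_def .
  then show ?thesis using that(4)
  proof (induction arbitrary: \<beta> rule: rtrancl_induct)
    case base then show ?case using LC_pre that by blast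
  next
    case (step D1 D2)
    from step(2) obtain \<gamma>1 \<gamma>2 where g: "\<gamma>1 \<in> D1" "\<gamma>2 \<in> D2" "(\<gamma>1, \<gamma>2) \<in> Ap p" "D1 \<in> LC" "D2 \<in> LC"
      unfolding CA_def contracted_adj_def LC_def[symmetric] by blast
    have "pre \<alpha> = pre \<gamma>1" using step(3) g by blast
    also have "\<dots> = pre \<gamma>2" using A_pre[OF p g(3)] .
    also have "\<dots> = pre \<beta>" using LC_pre[OF g(5) g(2) step(4)] .
    finally show ?case .
  qed
  qed
  have frz: "R `` {col p xs w} = {col p xs w}" if xs: "xs \<in> Perms" and w: "w \<subseteq> Sq q" for xs w
  proof -
    have "y = col p xs w" if "(col p xs w, y) \<in> R" for y
      using that unfolding R_def
    proof (cases rule: converse_rtranclE)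
      case (step z)
      hence "(col p xs w, z) \<in> Ap p" "restrict (col p xs w) {p-2, p-1} = restrict z {p-2, p-1}"
        unfolding L_def T_def by auto
      then show ?thesis using frozen[OF assms xs w] by blast
    qed simp
    moreover have "(col p xs w, col p xs w) \<in> R" unfolding R_def by simp
    ultimately show ?thesis by blast
  qed
  define X where "X = (\<lambda>xs. CR `` {R `` {col p xs {}}})"
  have colC: "col p xs w \<in> C" if "xs \<in> Perms" for xs w using col_C[OF p that] unfolding C_def .
  have XCC: "X xs \<in> CC" if "xs \<in> Perms" for xs
    unfolding X_def CC_eq CR_def using gc_mem[OF LCm[OF colC[OF that]]] .
  have finC: "finite C" using C_finite[OF p] unfolding C_def .
  have finLC: "finite LC" unfolding LC_eq using gc_sub finC by (meson finite_Pow_iff finite_subset)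
  have finCC: "finite CC" unfolding CC_eq using gc_sub finLC by (meson finite_Pow_iff finite_subset)
  have Xcard: "2 ^ q \<le> card (X xs)" if xs: "xs \<in> Perms" for xs
  proof -
    have sub: "(\<lambda>w. {col p xs w}) ` Pow (Sq q) \<subseteq> X xs"
    proof
      fix D assume "D \<in> (\<lambda>w. {col p xs w}) ` Pow (Sq q)"
      then obtain w where w: "w \<subseteq> Sq q" "D = {col p xs w}" by auto
      have "\<forall>i<4. col p xs {} i = col p xs w i"
        using p by (simp add: col_def sq_lt4)
      hence "(col p xs {}, col p xs w) \<in> (Ap p)\<^sup>*"
        using conn[OF p col_C[OF p xs] col_C[OF p xs], of 4] by simp
      hence "(R `` {col p xs {}}, R `` {col p xs w}) \<in> CR" using lift colC[OF xs] by blast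
      thus "D \<in> X xs" unfolding X_def using frz[OF xs w(1)] w(2) by simp
    qed
    have inj: "inj_on (\<lambda>w. {col p xs w}) (Pow (Sq q))"
      using col_inj[OF assms xs] by (auto simp: inj_on_def)
    have "card ((\<lambda>w. {col p xs w}) ` Pow (Sq q)) = 2 ^ q"
    proof -
      have "finite (Sq q)" unfolding Sq_def by simp
      thus ?thesis using card_Pow[of "Sq q"] Sq_card[of q] inj by (simp add: card_image)
    qed
    moreover have "finite (X xs)" using XCC[OF xs] finLC gc_sub unfolding CC_eq
      by (meson PowD finite_subset subsetD)
    ultimately show ?thesis using card_mono[OF _ sub] by simp
  qed
  have Xinj: "inj_on X Perms"
  proof
    fix xs ys assume xs: "xs \<in> Perms" and ys: "ys \<in> Perms" and e: "X xs = X ys"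
    have "R `` {col p ys {}} \<in> X ys" unfolding X_def CR_def by simp
    hence "R `` {col p ys {}} \<in> CR `` {R `` {col p xs {}}}" using e unfolding X_def by simp
    hence "(R `` {col p xs {}}, R `` {col p ys {}}) \<in> CR" by simp
    moreover have "col p xs {} \<in> R `` {col p xs {}}" "col p ys {} \<in> R `` {col p ys {}}"
      unfolding R_def by auto
    ultimately have "pre (col p xs {}) = pre (col p ys {})"
      using CR_pre LCm colC xs ys by blast
    thus "xs = ys" using col_pre[OF p xs, of "{}"] col_pre[OF p ys, of "{}"] unfolding pre_def by metis
  qed
  have c4: "card {1,2,3,4::nat} = 4" by simp
  have "card Perms = fact (card {1,2,3,4::nat})" by (rule card_permutations_of_set) simp
  hence "fact 4 = card Perms" unfolding c4 by simp
  also have "\<dots> = card (X ` Perms)" using card_image[OF Xinj] by simp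
  also have "\<dots> \<le> card {Y \<in> CC. card Y \<ge> 2 ^ q}"
    by (rule card_mono) (use finCC XCC Xcard in auto)
  finally show ?thesis unfolding CC_def T_def .
qed

end
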